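(* Let $\mu>1$ be a real number, $N\ge 1$ an integer, and $f:\mathbb{N}\to\mathbb{R}$ a non-negative, non-decreasing function with $\sum_{n=1}^\infty f(n)/n^2<\infty$. Let $a(1),a(2),\dots$ be a sequence of real numbers such that $$a(n+m)\le a(n)+a(m)+f(n+m)$$ holds for all integers $n,m$ with $N\le n\le m\le \mu n$. Then $\lim_{n\to\infty} a(n)/n$ exists (possibly $-\infty$). *)

theory Defs
  imports Complex_Main "HOL-Library.Extended_Real"
begin

end

theory Submission
  imports Defs
begin


lemma dyadic_ex:
  fixes c m :: nat
  assumes "c \<ge> 1" "m \<ge> c"
  shows "\<exists>i. c * 2^i \<le> m \<and> m < c * 2^(Suc i)"
  using assms(2)
proof (induction m rule: less_induct)
  case (less m)
  show ?case
  proof (cases "m < 2*c")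
    case True then show ?thesis by (rule_tac x=0 in exI) (use less in auto)
  next
    case False
    then have "m div 2 \<ge> c" by linarith
    moreover have "m div 2 < m" using less assms by simp
    ultimately obtain i where i: "c*2^i \<le> m div 2" "m div 2 < c*2^Suc i" using less by blast
    have "c*2^Suc i \<le> m" using i(1) by simp
    moreover have "m < c*2^Suc (Suc i)" using i(2) by simp
    ultimately show ?thesis by blast
  qed
qed

primrec cc :: "real \<Rightarrow> nat \<Rightarrow> real" where
  "cc m 0 = 1" | "cc m (Suc j) = (1+m)*(cc m j + 2)"

lemma cc_ge1: assumes "m > 1" shows "cc m j \<ge> 1"
proof (induction j)
  case (Suc j)
  have "1*(cc m j + 2) \<le> (1+m)*(cc m j+2)" using Suc assms by (intro mult_right_mono) auto
  hence "cc m j + 2 \<le> (1+m)*(cc m j+2)" by simp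
  thus ?case using Suc by (simp only: cc.simps)
qed simp

locale nsa =
  fixes \<mu> :: real and N :: nat and f a :: "nat \<Rightarrow> real"
  assumes mu: "\<mu> > 1" and N1: "N \<ge> 1"
    and fpos: "\<And>n. n \<ge> 1 \<Longrightarrow> f n \<ge> 0"
    and fmono: "\<And>n m. 1 \<le> n \<Longrightarrow> n \<le> m \<Longrightarrow> f n \<le> f m"
    and fsum: "summable (\<lambda>n. f (Suc n) / (real (Suc n))^2)"
    and sub: "\<And>n m. N \<le> n \<Longrightarrow> n \<le> m \<Longrightarrow> real m \<le> \<mu> * real n \<Longrightarrow>
           a (n + m) \<le> a n + a m + f (n + m)"
begin

definition g :: "nat \<Rightarrow> real" where "g n = f n / (real n)^2"

lemma g_summable: "summable g"
  using fsum summable_Suc_iff[of g] by (simp add: g_def)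

lemma g_nonneg: "g n \<ge> 0"
  by (cases "n = 0") (auto simp: g_def fpos)

lemma fdiv: assumes "x \<ge> 1" shows "f x / x \<le> 4 * (\<Sum>n\<in>{x..<2*x}. g n)"
proof -
  have "\<And>n. n \<in> {x..<2*x} \<Longrightarrow> f x / (4 * (real x)^2) \<le> g n"
  proof -
    fix n assume n: "n \<in> {x..<2*x}"
    have fx: "0 \<le> f x" "f x \<le> f n" using fpos fmono assms n by auto
    have "real n ^2 \<le> (2 * real x)^2" using n by (intro power_mono) auto
    hence "real n ^2 \<le> 4 * (real x)^2" by (simp add: power_mult_distrib)
    moreover have "real n ^2 > 0" using n assms by auto
    ultimately have "f x / (4 * (real x)^2) \<le> f x / (real n)^2"
      using fx assms by (intro divide_left_mono) auto
    also have "\<dots> \<le> f n / (real n)^2" using fx by (intro divide_right_mono) auto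
    finally show "f x / (4 * (real x)^2) \<le> g n" by (simp add: g_def)
  qed
  hence "(\<Sum>n\<in>{x..<2*x}. f x / (4 * (real x)^2)) \<le> (\<Sum>n\<in>{x..<2*x}. g n)"
    by (rule sum_mono)
  moreover have "(\<Sum>n\<in>{x..<2*x}. f x / (4 * (real x)^2)) = f x / (4 * x)"
    using assms by (simp add: power2_eq_square)
  moreover have "f x / x = 4 * (f x / (4 * x))" by simp
  ultimately show ?thesis by linarith
qed

lemma tail_small:
  fixes \<eta> :: real
  assumes "\<eta> > 0"
  shows "\<exists>K. \<forall>k\<ge>K. \<forall>m. (\<Sum>n\<in>{k..<m}. g n) \<le> \<eta>"
proof -
  obtain K where K: "\<And>n. n \<ge> K \<Longrightarrow> norm (\<Sum>i. g (i + n)) < \<eta>"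
    using suminf_exist_split[OF assms g_summable] by blast
  have "(\<Sum>n\<in>{k..<m}. g n) \<le> \<eta>" if "k \<ge> K" for k m
  proof -
    have "(\<Sum>n\<in>{k..<m}. g n) = (\<Sum>i\<in>{0..<m-k}. g (i + k))"
    proof (cases "k \<le> m")
      case True then show ?thesis
        using sum.shift_bounds_nat_ivl[of g 0 k "m-k"] by (simp add: add.commute)
    qed auto
    also have "\<dots> \<le> (\<Sum>i. g (i + k))"
      by (rule sum_le_suminf) (auto intro: summable_ignore_initial_segment g_summable g_nonneg)
    also have "\<dots> \<le> \<eta>" using K[OF that] by simp
    finally show ?thesis .
  qed
  thus ?thesis by blast
qed

lemma fsmall:
  fixes \<eta> :: real
  assumes "\<eta> > 0"
  shows "\<exists>K. \<forall>x\<ge>K. f x \<le> \<eta> * x"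
proof -
  obtain K where K: "\<And>k m. k \<ge> K \<Longrightarrow> (\<Sum>n\<in>{k..<m}. g n) \<le> \<eta>/4"
    using tail_small[of "\<eta>/4"] assms by auto
  have "f x \<le> \<eta> * x" if "x \<ge> max 1 K" for x
  proof -
    have "f x / x \<le> \<eta>" using fdiv[of x] K[of x "2*x"] that by auto
    thus ?thesis using that by (simp add: field_simps)
  qed
  thus ?thesis by blast
qed

lemma double_step:
  assumes "y \<ge> N"
  shows "a (2*y) / (2*y) \<le> a y / y + 4 * (\<Sum>n\<in>{2*y..<2*(2*y)}. g n)"
proof -
  have y1: "y \<ge> 1" using assms N1 by simp
  have "1 * real y \<le> \<mu> * real y" by (rule mult_right_mono) (use mu in auto)
  hence "a (y + y) \<le> a y + a y + f (y + y)"
    using sub[OF assms, of y] by simp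
  moreover have "y + y = 2*y" by simp
  ultimately have A: "a (2*y) \<le> 2 * a y + f (2*y)" by simp
  have y0: "real (2*y) > 0" using y1 by simp
  have B: "f (2*y) / real (2*y) \<le> 4 * (\<Sum>n\<in>{2*y..<2*(2*y)}. g n)"
    by (rule fdiv) (use y1 in simp)
  have "a (2*y) / real (2*y) \<le> (2 * a y + f (2*y)) / real (2*y)"
    by (rule divide_right_mono[OF A]) simp
  also have "(2 * a y + f (2*y)) / real (2*y) = a y / y + f (2*y) / real (2*y)"
    using y1 by (simp add: add_divide_distrib)
  finally show ?thesis using B by simp
qed

lemma upward:
  assumes "k \<ge> N"
  shows "a (k*2^i) / (k*2^i) \<le> a k / k + 4 * (\<Sum>n\<in>{2*k..<2*k*2^i}. g n)"
proof (induction i)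
  case 0 then show ?case by simp
next
  case (Suc i)
  have "1 \<le> (2::nat)^i" by simp
  hence "k*1 \<le> k*2^i" by (rule mult_le_mono2)
  hence kN: "k*2^i \<ge> N" using assms by linarith
  have e1: "k*2^Suc i = 2*(k*2^i)" by simp
  have e2: "2*(k*2^i) = 2*k*2^i" "2*(2*k*2^i) = 2*k*2^Suc i" by simp_all
  have "a (k*2^Suc i) / (k*2^Suc i) = a (2*(k*2^i)) / (2*(k*2^i))" by (simp only: e1)
  also have "\<dots> \<le> a (k*2^i) / (k*2^i) + 4 * (\<Sum>n\<in>{2*(k*2^i)..<2*(2*(k*2^i))}. g n)"
    by (rule double_step[OF kN])
  also have "\<dots> = a (k*2^i) / (k*2^i) + 4 * (\<Sum>n\<in>{2*k*2^i..<2*k*2^Suc i}. g n)"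
    by (simp only: e2)
  also have "\<dots> \<le> a k / k + 4 * (\<Sum>n\<in>{2*k..<2*k*2^i}. g n) + 4 * (\<Sum>n\<in>{2*k*2^i..<2*k*2^Suc i}. g n)"
    using Suc by linarith
  also have "(\<Sum>n\<in>{2*k..<2*k*2^i}. g n) + (\<Sum>n\<in>{2*k*2^i..<2*k*2^Suc i}. g n) = (\<Sum>n\<in>{2*k..<2*k*2^Suc i}. g n)"
    by (rule sum.atLeastLessThan_concat) simp_all
  hence "a k / k + 4 * (\<Sum>n\<in>{2*k..<2*k*2^i}. g n) + 4 * (\<Sum>n\<in>{2*k*2^i..<2*k*2^Suc i}. g n) = a k / k + 4 * (\<Sum>n\<in>{2*k..<2*k*2^Suc i}. g n)"
    by linarith
  finally show ?case .
qed

lemma crude: "\<exists>B K. \<forall>m\<ge>K. a m / m \<le> B"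
proof -
  define c where "c = max N (nat \<lceil>1/(\<mu>-1)\<rceil>)"
  have c1: "c \<ge> 1" "c \<ge> N" using N1 by (auto simp: c_def)
  have cmu: "(\<mu>-1) * c \<ge> 1"
  proof -
    have "real c \<ge> 1/(\<mu>-1)" unfolding c_def by linarith
    thus ?thesis using mu by (simp add: field_simps)
  qed
  define B0 where "B0 = Max ((\<lambda>m. a m / m) ` {c..2*c})"
  have P: "\<forall>m. c*2^i \<le> m \<longrightarrow> m \<le> c*2^(Suc i) \<longrightarrow> a m / m \<le> B0 + 8 * (\<Sum>n\<in>{4*c..<c*2^(i+2)}. g n)" for i
  proof (induction i)
    case 0
    show ?case
    proof (intro allI impI)
      fix m assume "c*2^0 \<le> m" "m \<le> c*2^Suc 0"
      hence "m \<in> {c..2*c}" by simp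
      hence "a m / m \<le> B0" unfolding B0_def by (intro Max_ge) auto
      moreover have "(\<Sum>n\<in>{4*c..<c*2^(0+2)}. g n) = 0" by simp
      ultimately show "a m / m \<le> B0 + 8 * (\<Sum>n\<in>{4*c..<c*2^(0+2)}. g n)" by simp
    qed
  next
    case (Suc i)
    define Bi where "Bi = B0 + 8 * (\<Sum>n\<in>{4*c..<c*2^(i+2)}. g n)"
    define Y where "Y = c*2^(i+2)"
    have eY: "c*2^Suc (Suc i) = Y" "c*2^Suc i * 2 = Y" unfolding Y_def by simp_all
    show ?case
    proof (intro allI impI)
      fix m assume m1: "c*2^Suc i \<le> m" and m2: "m \<le> c*2^Suc (Suc i)"
      define p where "p = m div 2"
      define q where "q = m - p"
      have "c*2^Suc i = 2 * (c*2^i)" by simp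
      hence pq1: "c*2^i \<le> p" using m1 unfolding p_def by linarith
      have "c*2^Suc (Suc i) = 2 * (c*2^Suc i)" by simp
      hence pq3: "q \<le> c*2^Suc i" using m2 unfolding p_def q_def by linarith
      have pq2: "p \<le> q" "q \<le> p + 1" "p + q = m" unfolding p_def q_def by linarith+
      have "1 \<le> (2::nat)^i" by simp
      hence "c*1 \<le> c*2^i" by (rule mult_le_mono2)
      hence pc: "p \<ge> c" using pq1 by linarith
      have "real q \<le> \<mu> * real p"
      proof -
        have "(\<mu>-1) * p \<ge> (\<mu>-1) * c" using pc mu by (intro mult_left_mono) auto
        moreover have "real q \<le> real p + 1" using pq2 by linarith
        ultimately show ?thesis using cmu by (simp add: algebra_simps)
      qed
      hence "a (p + q) \<le> a p + a q + f (p + q)" using sub[of p q] pc c1 pq2 by linarith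
      hence am: "a m \<le> a p + a q + f m" using pq2 by simp
      have p0: "real p > 0" "real q > 0" using pc pq2 c1 by auto
      have "p \<le> c*2^Suc i" using pq2 pq3 by linarith
      hence "a p / p \<le> Bi" using Suc pq1 unfolding Bi_def by blast
      hence ap1: "a p \<le> Bi * p" using p0 by (simp add: pos_divide_le_eq)
      have "c*2^i \<le> q" using pq1 pq2 by linarith
      hence "a q / q \<le> Bi" using Suc pq3 unfolding Bi_def by blast
      hence ap2: "a q \<le> Bi * q" using p0 by (simp add: pos_divide_le_eq)
      have m0: "real m \<ge> 1" "m \<ge> 1" using pq2 pc c1 by linarith+
      have Y1: "Y \<ge> 1" using m0 m2 eY by linarith
      have fm: "f m \<le> f Y" using fmono[of m Y] m0 m2 eY by simp
      have fY: "f Y / Y \<le> 4 * (\<Sum>n\<in>{Y..<2*Y}. g n)" by (rule fdiv[OF Y1])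
      hence fY': "f Y \<le> 4 * Y * (\<Sum>n\<in>{Y..<2*Y}. g n)" using Y1 by (simp add: pos_divide_le_eq mult_ac)
      have "Y \<le> 2*m" using m1 eY by linarith
      hence "real Y \<le> real (2*m)" by (simp only: of_nat_le_iff)
      hence "real Y \<le> 2 * m" by simp
      moreover have "0 \<le> (\<Sum>n\<in>{Y..<2*Y}. g n)" by (simp add: sum_nonneg g_nonneg)
      ultimately have "4 * Y * (\<Sum>n\<in>{Y..<2*Y}. g n) \<le> 4 * (2*m) * (\<Sum>n\<in>{Y..<2*Y}. g n)"
        by (intro mult_right_mono) auto
      with fm fY' have fm2: "f m \<le> m * (8 * (\<Sum>n\<in>{Y..<2*Y}. g n))" by simp
      have mm: "Bi * real m = Bi * real p + Bi * real q" using pq2 by (metis distrib_left of_nat_add)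
      have "a m \<le> Bi * m + m * (8 * (\<Sum>n\<in>{Y..<2*Y}. g n))"
        using am ap1 ap2 fm2 mm by linarith
      hence "a m / m \<le> Bi + 8 * (\<Sum>n\<in>{Y..<2*Y}. g n)" using m0 by (simp add: pos_divide_le_eq algebra_simps)
      also have "(\<Sum>n\<in>{4*c..<Y}. g n) + (\<Sum>n\<in>{Y..<2*Y}. g n) = (\<Sum>n\<in>{4*c..<2*Y}. g n)"
        by (rule sum.atLeastLessThan_concat) (use eY m1 m2 in \<open>simp_all add: Y_def\<close>)
      hence "Bi + 8 * (\<Sum>n\<in>{Y..<2*Y}. g n) = B0 + 8 * (\<Sum>n\<in>{4*c..<2*Y}. g n)"
        unfolding Bi_def Y_def by simp
      also have "2*Y = c*2^(Suc i+2)" unfolding Y_def by simp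
      finally show "a m / m \<le> B0 + 8 * (\<Sum>n\<in>{4*c..<c*2^(Suc i+2)}. g n)" .
    qed
  qed
  have "a m / m \<le> B0 + 8 * suminf g" if mc: "m \<ge> c" for m
  proof -
    obtain i where i: "c*2^i \<le> m" "m < c*2^Suc i" using dyadic_ex[OF c1(1) mc] by blast
    have "(\<Sum>n\<in>{4*c..<c*2^(i+2)}. g n) \<le> suminf g"
      by (rule sum_le_suminf) (auto intro: g_summable g_nonneg)
    moreover have "a m / m \<le> B0 + 8 * (\<Sum>n\<in>{4*c..<c*2^(i+2)}. g n)"
      by (rule P[of i, rule_format, OF i(1) less_imp_le[OF i(2)]])
    ultimately show ?thesis by linarith
  qed
  thus ?thesis by (intro exI[of _ "B0 + 8*suminf g"] exI[of _ c]) auto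
qed


lemma lower_step:
  fixes lam \<epsilon> e :: real
  assumes K1: "\<And>m. m \<ge> K1 \<Longrightarrow> a m \<le> (lam+\<epsilon>) * m"
    and K2: "\<And>x. x \<ge> K2 \<Longrightarrow> f x \<le> \<epsilon> * x"
    and ax: "a x \<ge> (lam - e) * x" and e0: "e \<ge> 0" and eps: "\<epsilon> \<ge> 0"
    and nx: "2*n \<le> x" "real x \<le> (1+\<mu>)*n" and nN: "n \<ge> N" "n \<ge> K1" "x \<ge> K2"
  shows "a n \<ge> (lam - (1+\<mu>)*(e+2*\<epsilon>)) * n"
proof -
  define m' where "m' = x - n"
  have m'1: "n \<le> m'" "n + m' = x" using nx unfolding m'_def by auto
  have rm: "real m' = real x - real n" using m'1 by linarith
  have "real m' \<le> \<mu> * real n" using rm nx by (simp add: algebra_simps)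
  hence "a (n + m') \<le> a n + a m' + f (n + m')" using sub[OF nN(1) m'1(1)] by simp
  hence A: "a x \<le> a n + a m' + f x" using m'1 by simp
  have B: "a m' \<le> (lam+\<epsilon>) * m'" using K1 m'1 nN by simp
  have C: "f x \<le> \<epsilon> * x" using K2 nN by simp
  have D: "\<epsilon> * real m' \<le> \<epsilon> * x" using eps rm by (simp add: mult_left_mono)
  have E: "(e+2*\<epsilon>) * real x \<le> (e+2*\<epsilon>) * ((1+\<mu>)*n)" using nx e0 eps by (intro mult_left_mono) auto
  have F1: "(lam+\<epsilon>)*real m' = lam*real x - lam*real n + \<epsilon>*real m'" unfolding rm by (simp add: algebra_simps)
  have F2: "(lam - e)*real x = lam*x - e*x" by (simp add: algebra_simps)
  have F3: "(lam - (1+\<mu>)*(e+2*\<epsilon>)) * n = lam * n - (e+2*\<epsilon>) * ((1+\<mu>)*n)" by (simp add: algebra_simps)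
  have F4: "(e+2*\<epsilon>) * real x = e * x + 2 * (\<epsilon> * x)" by (simp add: algebra_simps)
  show ?thesis using A B C ax D E F1 F2 F3 F4 by linarith
qed


lemma interval:
  fixes lam eps R :: real and M J :: nat
  assumes K1: "\<And>m. m \<ge> K1 \<Longrightarrow> a m \<le> (lam+eps) * m"
    and K2: "\<And>x. x \<ge> K2 \<Longrightarrow> f x \<le> eps * x"
    and eps: "eps > 0"
    and R: "R \<ge> real N" "R \<ge> real K1" "R \<ge> real K2" "R \<ge> 4/(\<mu>-1)"
    and MR: "real M / ((3+\<mu>)/2)^J \<ge> R"
    and aM: "a M \<ge> (lam - eps) * M"
  shows "j \<le> J \<Longrightarrow> real M / ((3+\<mu>)/2)^j \<le> real n \<Longrightarrow> real n \<le> real M / 2^j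
     \<Longrightarrow> a n \<ge> (lam - eps * cc \<mu> j) * n"
proof (induction j arbitrary: n)
  case 0
  hence "n = M" by simp
  thus ?case using aM by simp
next
  case (Suc j)
  define \<beta> where "\<beta> = (3+\<mu>)/2"
  have b2: "\<beta> > 2" "\<beta> \<ge> 1" using mu unfolding \<beta>_def by auto
  define t where "t = real M / \<beta>^j"
  have M0: "real M \<ge> 0" by simp
  have pw: "\<beta>^Suc j \<le> \<beta>^J" "\<beta>^j \<le> \<beta>^J"
    using power_increasing[OF Suc.prems(1) b2(2)] power_increasing[of j J \<beta>] Suc.prems(1) b2(2) by auto
  have "real M / \<beta>^J \<le> real M / \<beta>^Suc j"
    by (rule divide_left_mono[OF pw(1) M0]) (use b2 in simp)
  hence nR: "real n \<ge> R" using MR Suc.prems(2) unfolding \<beta>_def by linarith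
  have "real M / \<beta>^J \<le> t" unfolding t_def
    by (rule divide_left_mono[OF pw(2) M0]) (use b2 in simp)
  hence tR: "t \<ge> R" using MR unfolding \<beta>_def by linarith
  have R0: "R * (\<mu>-1) \<ge> 4" using R(4) mu by (simp add: field_simps)
  have "4/(\<mu>-1) > 0" using mu by simp
  hence t0: "t \<ge> 0" using tR R(4) by linarith
  define A where "A = (1+\<mu>)*real n"
  define Bv where "Bv = real M / 2^j"
  have bn: "\<beta> * real n \<ge> t"
  proof -
    have "real M / \<beta>^Suc j \<le> real n" using Suc.prems(2) unfolding \<beta>_def .
    hence "real M \<le> real n * \<beta>^Suc j" using b2 by (simp add: pos_divide_le_eq)
    hence "real M \<le> (\<beta> * real n) * \<beta>^j" by (simp add: algebra_simps)
    thus ?thesis unfolding t_def using b2 by (simp add: pos_divide_le_eq)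
  qed
  have "(\<mu>-1)/2 * real n \<ge> (\<mu>-1)/2 * R" using nR mu by (intro mult_left_mono) auto
  moreover have "A - \<beta> * real n = (\<mu>-1)/2 * real n" unfolding A_def \<beta>_def by (simp add: algebra_simps)
  moreover have "(\<mu>-1)/2 * R = R*(\<mu>-1)/2" by simp
  ultimately have "A - \<beta> * real n \<ge> 2" using R0 by linarith
  hence A1: "A - 1 \<ge> t" using bn by linarith
  have n2: "2 * real n \<le> Bv"
  proof -
    have "real n \<le> real M / (2 * 2^j)" using Suc.prems(3) by simp
    thus ?thesis unfolding Bv_def by (simp add: field_simps)
  qed
  have "1 * real n \<le> \<mu> * real n" using mu by (intro mult_right_mono) auto
  hence n2A: "2 * real n \<le> A" unfolding A_def by (simp add: algebra_simps)
  define x where "x = nat \<lfloor>min A Bv\<rfloor>"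
  have min0: "min A Bv \<ge> 0" using n2 n2A by simp
  have rx: "real x = real_of_int \<lfloor>min A Bv\<rfloor>" unfolding x_def using min0 by simp
  have xA: "real x \<le> A" "real x \<le> Bv" using rx by (metis min.bounded_iff of_int_floor_le)+
  have "real_of_int (2 * int n) \<le> min A Bv" using n2 n2A by simp
  hence "2 * int n \<le> \<lfloor>min A Bv\<rfloor>" by (simp only: le_floor_iff)
  hence x2: "2 * n \<le> x" unfolding x_def by linarith
  have xt: "t \<le> real x"
  proof (cases "j = 0")
    case True
    hence "Bv = real M" "t = real M" unfolding Bv_def t_def by simp_all
    hence "min A Bv = real M" using A1 by simp
    thus ?thesis using rx \<open>t = real M\<close> by simp
  next
    case False
    have "(\<beta>/2)^j \<ge> (\<beta>/2)^1" using False b2 by (intro power_increasing) auto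
    have "Bv = t * (\<beta>/2)^j" unfolding Bv_def t_def using b2 by (simp add: power_divide)
    moreover have "t * (\<beta>/2)^j \<ge> t * (\<beta>/2)"
      using \<open>(\<beta>/2)^j \<ge> (\<beta>/2)^1\<close> t0 by (intro mult_left_mono) auto
    moreover have "t * (\<beta>/2) = t + t * ((\<mu>-1)/4)" unfolding \<beta>_def by (simp add: field_simps)
    moreover have "t * ((\<mu>-1)/4) \<ge> R * ((\<mu>-1)/4)" using tR mu by (intro mult_right_mono) auto
    ultimately have "Bv - 1 \<ge> t" using R0 by linarith
    hence "min A Bv - 1 \<ge> t" using A1 by simp
    thus ?thesis using rx by linarith
  qed
  have IH: "a x \<ge> (lam - eps * cc \<mu> j) * x"
    by (rule Suc.IH) (use Suc.prems(1) xt xA in \<open>simp_all add: t_def \<beta>_def Bv_def\<close>)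
  have "a n \<ge> (lam - (1+\<mu>)*(eps * cc \<mu> j + 2*eps)) * n"
  proof (rule lower_step[OF K1 K2 IH])
    show "0 \<le> eps * cc \<mu> j" using eps cc_ge1[OF mu, of j] by simp
    show "0 \<le> eps" using eps by simp
    show "2 * n \<le> x" by (rule x2)
    show "real x \<le> (1 + \<mu>) * real n" using xA unfolding A_def by simp
    show "N \<le> n" "K1 \<le> n" using nR R by linarith+
    show "K2 \<le> x" using nR R x2 by linarith
  qed
  moreover have "(1+\<mu>)*(eps * cc \<mu> j + 2*eps) = eps * cc \<mu> (Suc j)" by (simp add: algebra_simps)
  ultimately show ?case by simp
qed


lemma key:
  fixes lam \<eta> :: real
  assumes lsup: "\<And>\<epsilon>. \<epsilon> > 0 \<Longrightarrow> \<exists>K. \<forall>m\<ge>K. a m \<le> (lam + \<epsilon>) * m"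
    and freq: "\<And>\<epsilon> K. \<epsilon> > 0 \<Longrightarrow> \<exists>M\<ge>K. a M \<ge> (lam - \<epsilon>) * M"
    and eta: "\<eta> > 0"
  shows "\<exists>K. \<forall>k\<ge>K. lam - \<eta> \<le> a k / k"
proof -
  define \<beta> where "\<beta> = (3+\<mu>)/2"
  have b2: "\<beta>/2 > 1" "\<beta> > 0" using mu unfolding \<beta>_def by auto
  obtain J where J: "2 < (\<beta>/2)^J" using real_arch_pow[OF b2(1)] by blast
  define C where "C = cc \<mu> J"
  have C1: "C \<ge> 1" unfolding C_def by (rule cc_ge1[OF mu])
  define \<epsilon> where "\<epsilon> = \<eta> / (2*C)"
  have eps: "\<epsilon> > 0" unfolding \<epsilon>_def using eta C1 by simp
  have epsC: "\<epsilon> * C = \<eta>/2" unfolding \<epsilon>_def using C1 by simp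
  obtain K1 where K1: "\<And>m. m \<ge> K1 \<Longrightarrow> a m \<le> (lam+\<epsilon>) * m" using lsup[OF eps] by blast
  obtain K2 where K2: "\<And>x. x \<ge> K2 \<Longrightarrow> f x \<le> \<epsilon> * x" using fsmall[OF eps] by blast
  obtain K3 where K3: "\<And>k m. k \<ge> K3 \<Longrightarrow> (\<Sum>n\<in>{k..<m}. g n) \<le> \<eta>/8"
    using tail_small[of "\<eta>/8"] eta by auto
  define R where "R = max (real N) (max (real K1) (max (real K2) (4/(\<mu>-1))))"
  have R: "R \<ge> real N" "R \<ge> real K1" "R \<ge> real K2" "R \<ge> 4/(\<mu>-1)" unfolding R_def by auto
  have "lam - \<eta> \<le> a k / k" if k: "k \<ge> max N K3" for k
  proof -
    have kN: "k \<ge> N" "k \<ge> K3" "k \<ge> 1" using k N1 by auto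
    obtain M where M: "M \<ge> max (nat \<lceil>R * \<beta>^J\<rceil>) (2^J * k)" "a M \<ge> (lam - \<epsilon>) * M"
      using freq[OF eps] by blast
    have "real M \<ge> R * \<beta>^J" using M(1) by linarith
    hence MR: "real M / ((3+\<mu>)/2)^J \<ge> R" using b2 unfolding \<beta>_def by (simp add: pos_le_divide_eq)
    define q where "q = M div 2^J"
    have "2^J * k \<le> M" using M(1) by simp
    hence "(2^J * k) div 2^J \<le> M div 2^J" by (rule div_le_mono)
    hence qk: "q \<ge> k" unfolding q_def by simp
    obtain i where i: "k*2^i \<le> q" "q < k*2^Suc i" using dyadic_ex[OF kN(3) qk] by blast
    define y where "y = k*2^i"
    have e1: "M div 2^J * 2^J + M mod 2^J = M" by (rule div_mult_mod_eq)
    have e2: "M mod 2^J < 2^J" by simp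
    have qM: "q * 2^J \<le> M" "M < q*2^J + 2^J" unfolding q_def using e1 e2 by linarith+
    have p2: "(2::real)^J > 0" by simp
    have "real q * 2^J \<le> real M" using qM(1) by (metis of_nat_le_iff of_nat_mult of_nat_numeral of_nat_power)
    hence "real q \<le> real M / 2^J" using p2 by (simp add: pos_le_divide_eq)
    moreover have "real y \<le> real q" using i(1) unfolding y_def by (simp only: of_nat_le_iff)
    ultimately have y1: "real y \<le> real M / 2^J" by linarith
    have "k*2^Suc i = 2*y" unfolding y_def by simp
    hence "q + 1 \<le> 2*y" using i(2) by linarith
    hence "(q+1)*2^J \<le> 2*y*2^J" by (rule mult_le_mono1)
    moreover have "(q+1)*2^J = q*2^J + 2^J" by (simp add: algebra_simps)
    ultimately have "M < 2*y*2^J" using qM(2) by linarith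
    hence "real M < real (2*y*2^J)" by (simp only: of_nat_less_iff)
    hence "real M < 2*real y*2^J" by simp
    hence My: "real M / 2^J < 2 * real y" using p2 by (simp add: divide_less_eq)
    have bJ: "\<beta>^J = 2^J * (\<beta>/2)^J" by (simp add: power_divide)
    have "real M / \<beta>^J = (real M / 2^J) / (\<beta>/2)^J" unfolding bJ by (simp only: divide_divide_eq_left)
    also have "\<dots> \<le> (real M / 2^J) / 2" using J by (intro divide_left_mono) auto
    also have "\<dots> \<le> real y" using My by simp
    finally have y2: "real M / ((3+\<mu>)/2)^J \<le> real y" unfolding \<beta>_def .
    have low: "a y \<ge> (lam - \<epsilon> * cc \<mu> J) * y"
      by (rule interval[OF K1 K2 eps R MR M(2) order_refl y2 y1])
    have "y \<ge> 1" using kN unfolding y_def by simp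
    have ec: "\<epsilon> * cc \<mu> J = \<eta>/2" using epsC unfolding C_def .
    have "(lam - \<eta>/2) * y \<le> a y" using low unfolding ec .
    hence "a y / y \<ge> lam - \<eta>/2" using \<open>y \<ge> 1\<close> by (simp add: pos_le_divide_eq)
    moreover have "a y / y \<le> a k / k + 4 * (\<Sum>n\<in>{2*k..<2*k*2^i}. g n)"
      unfolding y_def by (rule upward[OF kN(1)])
    moreover have "(\<Sum>n\<in>{2*k..<2*k*2^i}. g n) \<le> \<eta>/8" using K3 kN by simp
    ultimately show ?thesis by linarith
  qed
  thus ?thesis by blast
qed


lemma main: "\<exists>L::ereal. L \<noteq> \<infinity> \<and> ((\<lambda>n. ereal (a n / real n)) \<longlongrightarrow> L) sequentially"
proof -
  define X where "X = (\<lambda>n. ereal (a n / real n))"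
  obtain B K where BK: "\<And>m. m \<ge> K \<Longrightarrow> a m / m \<le> B" using crude by blast
  have "eventually (\<lambda>n. X n \<le> ereal B) sequentially"
    unfolding eventually_sequentially X_def using BK by auto
  hence LS: "Limsup sequentially X \<le> ereal B" by (rule Limsup_bounded)
  have LL: "Limsup sequentially X \<le> Liminf sequentially X"
  proof (cases "Limsup sequentially X" rule: ereal_cases)
    case (real lam)
    have lsup: "\<exists>K. \<forall>m\<ge>K. a m \<le> (lam + \<epsilon>) * m" if e: "\<epsilon> > 0" for \<epsilon> :: real
    proof -
      have "Limsup sequentially X < ereal (lam + \<epsilon>)" using real e by simp
      hence "eventually (\<lambda>m. X m < ereal (lam + \<epsilon>)) sequentially" by (rule Limsup_lessD)
      then obtain K where K: "\<And>m. m \<ge> K \<Longrightarrow> a m / m < lam + \<epsilon>"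
        unfolding eventually_sequentially X_def by auto
      have "a m \<le> (lam + \<epsilon>) * m" if "m \<ge> max K 1" for m
      proof -
        have "a m / m < lam + \<epsilon>" "real m > 0" using K that by auto
        thus ?thesis by (simp add: divide_less_eq)
      qed
      thus ?thesis by blast
    qed
    have freq: "\<exists>M\<ge>K. a M \<ge> (lam - \<epsilon>) * M" if e: "\<epsilon> > 0" for \<epsilon> :: real and K
    proof (rule ccontr)
      assume "\<not> ?thesis"
      hence A: "\<And>M. M \<ge> K \<Longrightarrow> a M < (lam - \<epsilon>) * M" by force
      have "X M \<le> ereal (lam - \<epsilon>)" if "M \<ge> max K 1" for M
      proof -
        have "a M < (lam - \<epsilon>) * M" "real M > 0" using A that by auto
        hence "a M / M < lam - \<epsilon>" by (simp add: divide_less_eq)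
        thus ?thesis unfolding X_def by simp
      qed
      hence "eventually (\<lambda>n. X n \<le> ereal (lam - \<epsilon>)) sequentially"
        unfolding eventually_sequentially by blast
      hence "Limsup sequentially X \<le> ereal (lam - \<epsilon>)" by (rule Limsup_bounded)
      thus False using real e by simp
    qed
    have "ereal lam \<le> Liminf sequentially X"
    proof (rule ereal_le_epsilon2)
      fix e :: real assume e: "e > 0"
      obtain K where K: "\<And>k. k \<ge> K \<Longrightarrow> lam - e \<le> a k / k"
        using key[OF lsup freq e] by blast
      have "eventually (\<lambda>n. ereal (lam - e) \<le> X n) sequentially"
        unfolding eventually_sequentially X_def using K by auto
      hence "ereal (lam - e) \<le> Liminf sequentially X" by (rule Liminf_bounded)
      hence "ereal (lam - e) + ereal e \<le> Liminf sequentially X + ereal e" by (rule add_right_mono)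
      thus "ereal lam \<le> Liminf sequentially X + ereal e" by simp
    qed
    thus ?thesis using real by simp
  next
    case PInf thus ?thesis using LS by simp
  next
    case MInf thus ?thesis by simp
  qed
  have "Liminf sequentially X \<le> Limsup sequentially X" by (rule Liminf_le_Limsup) simp
  hence eq: "Liminf sequentially X = Limsup sequentially X" using LL by simp
  have "(X \<longlongrightarrow> Limsup sequentially X) sequentially"
    by (rule Liminf_eq_Limsup) (use eq in simp_all)
  moreover have "Limsup sequentially X \<noteq> \<infinity>" using LS by auto
  ultimately show ?thesis unfolding X_def by blast
qed

end

theorem theorem4p4:
  fixes \<mu> :: real and N :: nat and f a :: "nat \<Rightarrow> real"
  assumes "\<mu> > 1" and "N \<ge> 1"
    and "\<And>n. n \<ge> 1 \<Longrightarrow> f n \<ge> 0"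
    and "\<And>n m. 1 \<le> n \<Longrightarrow> n \<le> m \<Longrightarrow> f n \<le> f m"
    and "summable (\<lambda>n. f (Suc n) / (real (Suc n))^2)"
    and "\<And>n m. N \<le> n \<Longrightarrow> n \<le> m \<Longrightarrow> real m \<le> \<mu> * real n \<Longrightarrow>
           a (n + m) \<le> a n + a m + f (n + m)"
  shows "\<exists>L::ereal. L \<noteq> \<infinity> \<and> ((\<lambda>n. ereal (a n / real n)) \<longlongrightarrow> L) sequentially"
proof -
  interpret nsa \<mu> N f a by unfold_locales (use assms in auto)
  show ?thesis by (rule main)
qed

end
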